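(* Let $n\geq 600$ and let $\sigma$ be a permutation of $[n]$. Then the family $\mathcal D_{n,\overline{\sigma}}$ is $\left(\frac n{30},\frac n4\right)$-spread.
   Context: Permutations of $[n]$ are identified with their graphs $\{(i,\pi(i))\}\subset[n]^2$; two permutations intersect if they agree at some point. $\mathcal D_{n,\overline{\sigma}}$ is the family of derangements (fixed-point-free permutations) of $[n]$ that do not intersect $\sigma$. For a family $\mathcal{F}$ of subsets of $[n]^2$ and $X\subset[n]^2$, $\mathcal{F}(X):=\{F\setminus X: X\subset F\in\mathcal{F}\}$; $\mathcal{F}$ is $r$-spread if $|\mathcal{F}(X)|\le r^{-|X|}|\mathcal{F}|$ for all $X$, and $(r,q)$-spread if $\mathcal{F}(A)$ is $r$-spread for every $A$ with $|A|\le q$. *)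

theory Defs
  imports Complex_Main "HOL-Combinatorics.Permutations"
begin

definition graph_on :: "nat \<Rightarrow> (nat \<Rightarrow> nat) \<Rightarrow> (nat \<times> nat) set" where
  "graph_on n \<pi> = {(i, \<pi> i) | i. i \<in> {1..n}}"

definition derangements_avoiding :: "nat \<Rightarrow> (nat \<Rightarrow> nat) \<Rightarrow> (nat \<times> nat) set set" where
  "derangements_avoiding n \<sigma> =
     {graph_on n \<pi> | \<pi>. \<pi> permutes {1..n} \<and> (\<forall>i\<in>{1..n}. \<pi> i \<noteq> i)
                        \<and> graph_on n \<pi> \<inter> graph_on n \<sigma> = {}}"

definition link :: "'a set set \<Rightarrow> 'a set \<Rightarrow> 'a set set" where
  "link \<F> X = {F - X | F. F \<in> \<F> \<and> X \<subseteq> F}"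

definition spread :: "real \<Rightarrow> 'a set set \<Rightarrow> bool" where
  "spread r \<F> \<longleftrightarrow> (\<forall>X. real (card (link \<F> X)) \<le> inverse r ^ card X * real (card \<F>))"

definition spread2 :: "real \<Rightarrow> real \<Rightarrow> 'a set set \<Rightarrow> bool" where
  "spread2 r q \<F> \<longleftrightarrow> (\<forall>A. real (card A) \<le> q \<longrightarrow> spread r (link \<F> A))"

end

theory Submission
  imports Defs
begin


definition valid :: "nat \<Rightarrow> (nat \<Rightarrow> nat) \<Rightarrow> (nat \<Rightarrow> nat) \<Rightarrow> bool" where
  "valid n \<sigma> \<pi> \<longleftrightarrow> \<pi> permutes {1..n} \<and> (\<forall>i\<in>{1..n}. \<pi> i \<noteq> i) \<and> (\<forall>i\<in>{1..n}. \<pi> i \<noteq> \<sigma> i)"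

definition NN :: "nat \<Rightarrow> (nat \<Rightarrow> nat) \<Rightarrow> (nat \<times> nat) set \<Rightarrow> nat" where
  "NN n \<sigma> B = card {\<pi>. valid n \<sigma> \<pi> \<and> B \<subseteq> graph_on n \<pi>}"

lemma graph_mem: "(a, b) \<in> graph_on n \<pi> \<longleftrightarrow> a \<in> {1..n} \<and> b = \<pi> a"
  unfolding graph_on_def by auto

lemma finite_graph: "finite (graph_on n \<pi>)"
proof -
  have "graph_on n \<pi> = (\<lambda>i. (i, \<pi> i)) ` {1..n}" unfolding graph_on_def by auto
  thus ?thesis by simp
qed

lemma card_graph: "card (graph_on n \<pi>) \<le> n"
proof -
  have "graph_on n \<pi> = (\<lambda>i. (i, \<pi> i)) ` {1..n}" unfolding graph_on_def by auto
  thus ?thesis using card_image_le[of "{1..n}" "\<lambda>i. (i, \<pi> i)"] by simp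
qed

lemma finite_valid: "finite {\<pi>. valid n \<sigma> \<pi> \<and> P \<pi>}"
  by (rule finite_subset[OF _ finite_permutations[of "{1..n}"]]) (auto simp: valid_def)

lemma der_eq: "derangements_avoiding n \<sigma> = graph_on n ` {\<pi>. valid n \<sigma> \<pi>}"
proof -
  have "graph_on n \<pi> \<inter> graph_on n \<sigma> = {} \<longleftrightarrow> (\<forall>i\<in>{1..n}. \<pi> i \<noteq> \<sigma> i)" for \<pi>
    unfolding graph_on_def by blast
  thus ?thesis unfolding derangements_avoiding_def valid_def by auto
qed

lemma graph_inj: "inj_on (graph_on n) {\<pi>. valid n \<sigma> \<pi>}"
proof (rule inj_onI)
  fix \<pi> \<rho> assume a: "\<pi> \<in> {\<pi>. valid n \<sigma> \<pi>}" "\<rho> \<in> {\<pi>. valid n \<sigma> \<pi>}" "graph_on n \<pi> = graph_on n \<rho>"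
  show "\<pi> = \<rho>"
  proof
    fix x show "\<pi> x = \<rho> x"
    proof (cases "x \<in> {1..n}")
      case True
      then have "(x, \<pi> x) \<in> graph_on n \<rho>" using a(3) graph_mem by metis
      then show ?thesis by (simp add: graph_mem)
    next
      case False
      then have "\<pi> x = x" "\<rho> x = x" using a(1,2) unfolding valid_def by (auto intro: permutes_not_in)
      then show ?thesis by simp
    qed
  qed
qed

lemma card_link: "card (link (derangements_avoiding n \<sigma>) A) = NN n \<sigma> A"
proof -
  let ?G = "{F \<in> derangements_avoiding n \<sigma>. A \<subseteq> F}"
  have "link (derangements_avoiding n \<sigma>) A = (\<lambda>F. F - A) ` ?G" unfolding link_def by auto
  moreover have "inj_on (\<lambda>F. F - A) ?G"
    by (rule inj_onI) (metis (no_types, lifting) Un_Diff_cancel2 mem_Collect_eq sup.absorb1)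
  ultimately have "card (link (derangements_avoiding n \<sigma>) A) = card ?G" by (simp add: card_image)
  also have "?G = graph_on n ` {\<pi>. valid n \<sigma> \<pi> \<and> A \<subseteq> graph_on n \<pi>}" unfolding der_eq by auto
  also have "card \<dots> = NN n \<sigma> A" unfolding NN_def
    by (rule card_image, rule inj_on_subset[OF graph_inj]) auto
  finally show ?thesis .
qed

lemma card_link2:
  assumes "X \<inter> A = {}"
  shows "card (link (link (derangements_avoiding n \<sigma>) A) X) \<le> NN n \<sigma> (A \<union> X)"
proof -
  let ?G = "{F \<in> derangements_avoiding n \<sigma>. A \<union> X \<subseteq> F}"
  have "link (link (derangements_avoiding n \<sigma>) A) X \<subseteq> (\<lambda>F. F - A - X) ` ?G" unfolding link_def using assms by auto
  moreover have "finite ?G" unfolding der_eq using finite_valid[of n \<sigma> "\<lambda>_. True"] by auto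
  ultimately have "card (link (link (derangements_avoiding n \<sigma>) A) X) \<le> card ?G"
    by (meson card_image_le card_mono finite_imageI le_trans)
  also have "?G = graph_on n ` {\<pi>. valid n \<sigma> \<pi> \<and> A \<union> X \<subseteq> graph_on n \<pi>}" unfolding der_eq by auto
  also have "card \<dots> = NN n \<sigma> (A \<union> X)" unfolding NN_def
    by (rule card_image, rule inj_on_subset[OF graph_inj]) auto
  finally show ?thesis .
qed

lemma link2_empty:
  assumes "X \<inter> A \<noteq> {}"
  shows "link (link F A) X = {}"
  using assms unfolding link_def by auto

lemma NN_mono: "B \<subseteq> C \<Longrightarrow> NN n \<sigma> C \<le> NN n \<sigma> B"
  unfolding NN_def by (rule card_mono[OF finite_valid]) auto



lemma switch:
  assumes sig: "\<sigma> permutes {1..n}" and finB: "finite B" and eB: "e \<notin> B"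
  shows "(n - card B - 5) * NN n \<sigma> (insert e B) \<le> NN n \<sigma> B"
proof -
  obtain i j where e: "e = (i, j)" by force
  let ?S = "{\<pi>. valid n \<sigma> \<pi> \<and> insert e B \<subseteq> graph_on n \<pi>}"
  let ?T = "{\<pi>. valid n \<sigma> \<pi> \<and> B \<subseteq> graph_on n \<pi>}"
  show ?thesis
  proof (cases "i \<in> fst ` B")
    case True
    then obtain j' where j': "(i, j') \<in> B" by force
    have "?S = {}"
    proof (rule ccontr)
      assume "?S \<noteq> {}"
      then obtain \<pi> where "insert e B \<subseteq> graph_on n \<pi>" by blast
      then have "(i,j) \<in> graph_on n \<pi>" "(i,j') \<in> graph_on n \<pi>" using e j' by auto
      then have "j = j'" by (simp add: graph_mem)
      then show False using eB e j' by simp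
    qed
    then have "NN n \<sigma> (insert e B) = 0" unfolding NN_def by (metis card.empty)
    then show ?thesis by simp
  next
    case False
    define K where "K \<pi> = {1..n} - (fst ` B \<union> {i, inv \<pi> i, inv \<pi> (\<sigma> i), j, inv \<sigma> j})" for \<pi>
    have cardK: "n - card B - 5 \<le> card (K \<pi>)" for \<pi>
    proof -
      have "card (fst ` B \<union> {i, inv \<pi> i, inv \<pi> (\<sigma> i), j, inv \<sigma> j}) \<le> card (fst ` B) + card {i, inv \<pi> i, inv \<pi> (\<sigma> i), j, inv \<sigma> j}"
        by (rule card_Un_le)
      also have "card {i, inv \<pi> i, inv \<pi> (\<sigma> i), j, inv \<sigma> j} \<le> 5"
        using card_length[of "[i, inv \<pi> i, inv \<pi> (\<sigma> i), j, inv \<sigma> j]"] by simp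
      also have "card (fst ` B) \<le> card B" by (rule card_image_le[OF finB])
      finally have "card (fst ` B \<union> {i, inv \<pi> i, inv \<pi> (\<sigma> i), j, inv \<sigma> j}) \<le> card B + 5" by simp
      moreover have "card {1..n} - card (fst ` B \<union> {i, inv \<pi> i, inv \<pi> (\<sigma> i), j, inv \<sigma> j}) \<le> card (K \<pi>)"
        unfolding K_def by (rule diff_card_le_card_Diff) (simp add: finB)
      ultimately show ?thesis by simp
    qed
    have finK: "finite (K \<pi>)" for \<pi> unfolding K_def by simp
    have finS: "finite ?S" by (rule finite_valid)
    have "card ?S * (n - card B - 5) \<le> (\<Sum>\<pi>\<in>?S. card (K \<pi>))"
      using sum_mono[of ?S "\<lambda>_. n - card B - 5" "\<lambda>\<pi>. card (K \<pi>)"] cardK by simp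
    also have "\<dots> = card (Sigma ?S K)" using finS finK by simp
    also have "card (Sigma ?S K) \<le> card ?T"
    proof (rule card_inj_on_le[where f = "\<lambda>(\<pi>, k). \<pi> \<circ> transpose i k"])
      show "finite ?T" by (rule finite_valid)
      show "inj_on (\<lambda>(\<pi>, k). \<pi> \<circ> transpose i k) (Sigma ?S K)"
      proof (rule inj_onI)
        fix x y assume xy: "x \<in> Sigma ?S K" "y \<in> Sigma ?S K"
          "(\<lambda>(\<pi>, k). \<pi> \<circ> transpose i k) x = (\<lambda>(\<pi>, k). \<pi> \<circ> transpose i k) y"
        obtain \<pi> k \<rho> k' where xy2: "x = (\<pi>, k)" "y = (\<rho>, k')" by force
        have p: "\<pi> \<in> ?S" "k \<in> K \<pi>" "\<rho> \<in> ?S" "k' \<in> K \<rho>" using xy(1,2) xy2 by auto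
        have eq: "\<pi> \<circ> transpose i k = \<rho> \<circ> transpose i k'" using xy(3) xy2 by simp
        have pi: "\<pi> i = j" "\<rho> i = j" using p e by (auto simp: graph_mem)
        have "(\<pi> \<circ> transpose i k) k = j" using pi by simp
        moreover have "(\<rho> \<circ> transpose i k') k' = j" using pi by simp
        moreover have "inj (\<pi> \<circ> transpose i k)"
        proof -
          have "\<pi> permutes {1..n}" using p(1) unfolding valid_def by blast
          then have "inj \<pi>" by (rule permutes_inj)
          then show ?thesis by (intro inj_compose) (auto simp: inj_transpose)
        qed
        ultimately have "k = k'" using eq by (metis injD)
        then have "\<pi> = \<rho>" using eq by (metis comp_assoc comp_id transpose_comp_involutory)
        then show "x = y" using \<open>k = k'\<close> xy2 by simp
      qed
      show "(\<lambda>(\<pi>, k). \<pi> \<circ> transpose i k) ` Sigma ?S K \<subseteq> ?T"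
      proof (rule image_subsetI)
        fix x assume x: "x \<in> Sigma ?S K"
        obtain \<pi> k where x2: "x = (\<pi>, k)" by force
        have p: "\<pi> \<in> ?S" "k \<in> K \<pi>" using x x2 by auto
        have vp: "valid n \<sigma> \<pi>" and sub: "insert e B \<subseteq> graph_on n \<pi>" using p by auto
        have pp: "\<pi> permutes {1..n}" using vp valid_def by blast
        have i: "i \<in> {1..n}" "\<pi> i = j" using sub e by (auto simp: graph_mem)
        have k: "k \<in> {1..n}" "k \<notin> fst ` B" "k \<noteq> i" "k \<noteq> inv \<pi> i" "k \<noteq> inv \<pi> (\<sigma> i)" "k \<noteq> j" "k \<noteq> inv \<sigma> j"
          using p(2) unfolding K_def by auto
        have k2: "\<pi> k \<noteq> i" "\<pi> k \<noteq> \<sigma> i" "\<sigma> k \<noteq> j"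
          using k permutes_inv_eq[OF pp] permutes_inv_eq[OF sig] by metis+
        have "valid n \<sigma> (\<pi> \<circ> transpose i k)"
          unfolding valid_def
        proof (intro conjI ballI)
          show "\<pi> \<circ> transpose i k permutes {1..n}" using permutes_compose[OF permutes_swap_id[OF i(1) k(1)] pp] .
          fix x assume x: "x \<in> {1..n}"
          show "(\<pi> \<circ> transpose i k) x \<noteq> x" using vp x k k2 i unfolding valid_def
            by (auto simp: transpose_def)
          show "(\<pi> \<circ> transpose i k) x \<noteq> \<sigma> x" using vp x k k2 i unfolding valid_def
            by (auto simp: transpose_def)
        qed
        moreover have "B \<subseteq> graph_on n (\<pi> \<circ> transpose i k)"
        proof
          fix b assume b: "b \<in> B"
          obtain b1 b2 where bb: "b = (b1, b2)" by force
          have "b1 \<noteq> i" "b1 \<noteq> k" using b bb False k(2) by force+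
          then show "b \<in> graph_on n (\<pi> \<circ> transpose i k)" using sub b bb by (auto simp: graph_mem transpose_def)
        qed
        ultimately show "(\<lambda>(\<pi>, k). \<pi> \<circ> transpose i k) x \<in> ?T" using x2 by simp
      qed
    qed
    finally show ?thesis unfolding NN_def by (simp add: mult.commute)
  qed
qed



lemma iter:
  assumes sig: "\<sigma> permutes {1..n}" and finA: "finite A" and finX: "finite X" and dis: "X \<inter> A = {}"
  shows "(\<Prod>t<card X. max 1 (n - (card A + t) - 5)) * NN n \<sigma> (A \<union> X) \<le> NN n \<sigma> A"
  using finX dis
proof (induction X rule: finite_induct)
  case empty
  then show ?case by simp
next
  case (insert x X)
  have IH: "(\<Prod>t<card X. max 1 (n - (card A + t) - 5)) * NN n \<sigma> (A \<union> X) \<le> NN n \<sigma> A"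
    using insert by auto
  have xn: "x \<notin> A \<union> X" using insert by auto
  have cAX: "card (A \<union> X) = card A + card X" using insert finA by (simp add: card_Un_disjoint inf_commute)
  have eq: "A \<union> insert x X = insert x (A \<union> X)" by auto
  have s: "(n - card (A \<union> X) - 5) * NN n \<sigma> (insert x (A \<union> X)) \<le> NN n \<sigma> (A \<union> X)"
    by (rule switch[OF sig _ xn]) (use insert finA in simp)
  have m: "NN n \<sigma> (insert x (A \<union> X)) \<le> NN n \<sigma> (A \<union> X)" by (rule NN_mono) auto
  have "max 1 (n - (card A + card X) - 5) * NN n \<sigma> (insert x (A \<union> X)) \<le> NN n \<sigma> (A \<union> X)"
    using s m cAX by (cases "1 \<le> n - (card A + card X) - 5") (auto simp: max_def)
  then have "(\<Prod>t<card X. max 1 (n - (card A + t) - 5)) * (max 1 (n - (card A + card X) - 5) * NN n \<sigma> (insert x (A \<union> X)))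
     \<le> (\<Prod>t<card X. max 1 (n - (card A + t) - 5)) * NN n \<sigma> (A \<union> X)" by (rule mult_left_mono) simp
  also note IH
  finally show ?case using insert eq by (simp add: mult.assoc mult.commute mult.left_commute)
qed

lemma fact_lower: "(real k / 3) ^ k \<le> fact k"
proof (induction k)
  case 0 then show ?case by simp
next
  case (Suc k)
  have key: "(real k + 1) ^ k \<le> 3 * real k ^ k"
  proof (cases "k = 0")
    case True then show ?thesis by simp
  next
    case False
    then have kp: "real k > 0" by simp
    have "(1 + 1 / real k) ^ k \<le> exp (1 / real k) ^ k"
      by (rule power_mono) (use exp_ge_add_one_self[of "1 / real k"] in auto)
    also have "\<dots> = exp (real k * (1 / real k))" by (rule exp_of_nat_mult[symmetric])
    also have "\<dots> = exp 1" using kp by simp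
    also have "\<dots> \<le> 3" by (rule exp_le)
    finally have "(1 + 1 / real k) ^ k \<le> 3" .
    moreover have "(1 + 1 / real k) ^ k = (real k + 1) ^ k / real k ^ k"
      using kp by (simp add: field_simps power_divide)
    ultimately show ?thesis using kp by (simp add: divide_le_eq)
  qed
  have "(real (Suc k) / 3) ^ Suc k = (real k + 1) / 3 * ((real k + 1) ^ k / 3 ^ k)"
    by (simp add: power_divide add.commute)
  also have "\<dots> \<le> (real k + 1) / 3 * (3 * real k ^ k / 3 ^ k)"
    by (rule mult_left_mono) (use key in \<open>auto simp: divide_right_mono\<close>)
  also have "\<dots> = (real k + 1) * (real k / 3) ^ k" by (simp add: power_divide)
  also have "\<dots> \<le> (real k + 1) * fact k" by (rule mult_left_mono[OF Suc.IH]) simp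
  also have "\<dots> = fact (Suc k)" by simp
  finally show ?case .
qed

lemma pow5: "(M::nat) \<ge> 10 \<Longrightarrow> M ^ 5 \<le> 6 ^ M"
proof (induction M rule: dec_induct)
  case base then show ?case by simp
next
  case (step M)
  have "5 * (M + 1) \<le> 6 * M" using step by simp
  then have "(5 * (M + 1)) ^ 5 \<le> (6 * M) ^ 5" by (rule power_mono) simp
  then have "5 ^ 5 * (M + 1) ^ 5 \<le> 6 ^ 5 * M ^ 5" by (simp only: power_mult_distrib)
  then have "3125 * (M + 1) ^ 5 \<le> 7776 * M ^ 5" by simp
  then have "(M + 1) ^ 5 \<le> 6 * M ^ 5" by linarith
  also have "\<dots> \<le> 6 * 6 ^ M" using step by simp
  finally show ?case by simp
qed



lemma prodbound:
  fixes n a x :: nat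
  assumes n: "n \<ge> 600" and a: "4 * a \<le> n" and x: "x \<le> n - a"
  shows "(real n / 30) ^ x \<le> real (\<Prod>t<x. max 1 (n - (a + t) - 5))"
proof -
  define m where "m = n - a"
  define M where "M = m - 5"
  define q where "q = real n / 30"
  define P where "P y = (\<Prod>t<y. max 1 (M - t))" for y
  have Peq: "(\<Prod>t<y. max 1 (n - (a + t) - 5)) = P y" for y
    unfolding P_def M_def m_def by (rule prod.cong) auto
  have mM: "m = M + 5" unfolding M_def m_def using n a by simp
  have Mr: "real M \<ge> 3 * real n / 4 - 5" unfolding M_def m_def using n a by simp
  have M10: "M \<ge> 10" using Mr n by simp
  have q20: "q \<ge> 20" unfolding q_def using n by simp
  have qM: "q \<le> real M" unfolding q_def using Mr n by simp
  have q6: "6 * q \<le> real M / 3" unfolding q_def using Mr n by simp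
  have PSuc: "P (Suc y) = P y * max 1 (M - y)" for y unfolding P_def by simp
  have Ppos: "P y > 0" for y unfolding P_def by (rule prod_pos) (auto simp: max_def)
  have ph1: "real y + q \<le> real M \<longrightarrow> q ^ y \<le> real (P y)" for y
  proof (induction y)
    case 0 then show ?case by (simp add: P_def)
  next
    case (Suc y)
    show ?case
    proof
      assume h: "real (Suc y) + q \<le> real M"
      then have "q ^ y \<le> real (P y)" using Suc by simp
      moreover have "q \<le> real (max 1 (M - y))" using h by (simp add: of_nat_diff)
      ultimately have "q ^ y * q \<le> real (P y) * real (max 1 (M - y))"
        using q20 by (intro mult_mono) auto
      then show "q ^ Suc y \<le> real (P (Suc y))" by (simp add: PSuc mult.commute)
    qed
  qed
  have PM: "real (P M) = fact M"
  proof -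
    have "P M = (\<Prod>i = 0..<M. M - i)" unfolding P_def lessThan_atLeast0 by (rule prod.cong) auto
    then show ?thesis by (simp add: fact_prod_rev)
  qed
  have Pmono: "P M \<le> P (M + k)" for k
  proof (induction k)
    case 0 then show ?case by simp
  next
    case (Suc k)
    have "P (M + k) \<le> P (M + k) * max 1 (M - (M + k))" by simp
    then show ?case using Suc by (simp add: PSuc)
  qed
  have base: "q ^ m \<le> real (P m)"
  proof -
    have "q ^ 5 \<le> real M ^ 5" using qM q20 by (intro power_mono) auto
    also have "\<dots> \<le> 6 ^ M" using pow5[OF M10] by (metis of_nat_le_iff of_nat_numeral of_nat_power)
    finally have q5: "q ^ 5 \<le> 6 ^ M" .
    have "q ^ m = q ^ M * q ^ 5" by (simp add: mM power_add)
    also have "\<dots> \<le> q ^ M * 6 ^ M" using q5 q20 by (intro mult_left_mono) auto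
    also have "\<dots> = (6 * q) ^ M" by (simp add: power_mult_distrib mult.commute)
    also have "\<dots> \<le> (real M / 3) ^ M" using q6 q20 by (intro power_mono) auto
    also have "\<dots> \<le> fact M" by (rule fact_lower)
    also have "\<dots> = real (P M)" using PM by simp
    also have "\<dots> \<le> real (P m)" using Pmono[of 5] mM by simp
    finally show ?thesis .
  qed
  have ph2: "d \<le> m \<longrightarrow> real M \<le> real (m - d) + q \<longrightarrow> q ^ (m - d) \<le> real (P (m - d))" for d
  proof (induction d)
    case 0 then show ?case using base by simp
  next
    case (Suc d)
    show ?case
    proof (intro impI)
      assume h1: "Suc d \<le> m" and h2: "real M \<le> real (m - Suc d) + q"
      define y where "y = m - Suc d"
      have y1: "m - d = Suc y" unfolding y_def using h1 by simp
      have "q ^ Suc y \<le> real (P (Suc y))" using Suc h1 h2 y1 unfolding y_def by simp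
      moreover have "real (max 1 (M - y)) \<le> q"
      proof (cases "M \<le> y")
        case True then show ?thesis using q20 by simp
      next
        case False then show ?thesis using h2 unfolding y_def[symmetric] by (simp add: of_nat_diff)
      qed
      ultimately have "q ^ y * q \<le> real (P y) * q"
        using PSuc[of y] by (smt (verit, ccfv_SIG) Ppos mult_left_mono of_nat_0_le_iff of_nat_mult power_Suc2)
      then show "q ^ (m - Suc d) \<le> real (P (m - Suc d))" using q20 unfolding y_def by simp
    qed
  qed
  have "q ^ x \<le> real (P x)"
  proof (cases "real x + q \<le> real M")
    case True then show ?thesis using ph1 by simp
  next
    case False
    have "x \<le> m" using x m_def by simp
    then show ?thesis using ph2[of "m - x"] False by simp
  qed
  then show ?thesis unfolding q_def Peq .
qed



theorem lemma15:
  fixes n :: nat and \<sigma> :: "nat \<Rightarrow> nat"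
  assumes "n \<ge> 600" and "\<sigma> permutes {1..n}"
  shows "spread2 (real n / 30) (real n / 4) (derangements_avoiding n \<sigma>)"
  unfolding spread2_def spread_def
proof (intro allI impI)
  fix A X :: "(nat \<times> nat) set"
  assume cA: "real (card A) \<le> real n / 4"
  let ?F = "derangements_avoiding n \<sigma>"
  let ?q = "real n / 30"
  have qpos: "?q > 0" using assms by simp
  have RHS: "inverse ?q ^ card X * real (card (link ?F A)) = inverse ?q ^ card X * real (NN n \<sigma> A)"
    by (simp add: card_link)
  show "real (card (link (link ?F A) X)) \<le> inverse ?q ^ card X * real (card (link ?F A))"
  proof (cases "X \<inter> A = {}")
    case False
    then show ?thesis using link2_empty[OF False] qpos by simp
  next
    case True
    have L: "card (link (link ?F A) X) \<le> NN n \<sigma> (A \<union> X)" by (rule card_link2[OF True])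
    show ?thesis
    proof (cases "NN n \<sigma> (A \<union> X) = 0")
      case True
      then show ?thesis using L qpos by simp
    next
      case False
      then obtain \<pi> where \<pi>: "valid n \<sigma> \<pi>" "A \<union> X \<subseteq> graph_on n \<pi>"
        unfolding NN_def by (metis (mono_tags, lifting) Collect_empty_eq card.empty)
      have finAX: "finite (A \<union> X)" using \<pi>(2) finite_graph finite_subset by blast
      then have finA: "finite A" and finX: "finite X" by auto
      have "card (A \<union> X) \<le> n" using card_mono[OF finite_graph \<pi>(2)] card_graph[of n \<pi>] by simp
      then have cX: "card X \<le> n - card A" using card_Un_disjoint[OF finA finX] True by (simp add: inf_commute)
      have a4: "4 * card A \<le> n" using cA by simp
      have it: "(\<Prod>t<card X. max 1 (n - (card A + t) - 5)) * NN n \<sigma> (A \<union> X) \<le> NN n \<sigma> A"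
        by (rule iter[OF assms(2) finA finX True])
      have pb: "?q ^ card X \<le> real (\<Prod>t<card X. max 1 (n - (card A + t) - 5))"
        by (rule prodbound[OF assms(1) a4 cX])
      have "?q ^ card X * real (NN n \<sigma> (A \<union> X)) \<le> real (\<Prod>t<card X. max 1 (n - (card A + t) - 5)) * real (NN n \<sigma> (A \<union> X))"
        using pb by (intro mult_right_mono) auto
      also have "\<dots> \<le> real (NN n \<sigma> A)" using it by (metis of_nat_le_iff of_nat_mult)
      finally have "?q ^ card X * real (NN n \<sigma> (A \<union> X)) \<le> real (NN n \<sigma> A)" .
      then have "real (NN n \<sigma> (A \<union> X)) \<le> inverse ?q ^ card X * real (NN n \<sigma> A)"
        using qpos by (simp add: power_inverse field_simps)
      then show ?thesis using L RHS by linarith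
    qed
  qed
qed


end
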